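(* For all integers $k\ge 3$ and $n\ge 1$, the cycle chain $\mathcal{C}_k^n$ is odd prime.
   Context: All graphs are finite and simple. A graph $G$ of order $N$ is odd prime if there is a bijection $\ell:V(G)\to\{1,3,\ldots,2N-1\}$ with $\gcd(\ell(u),\ell(v))=1$ for every edge $uv$. The cycle chain $\mathcal{C}_k^n$ has vertices $v_1,\ldots,v_{n+1}$ and, for each $i=1,\ldots,n$, two internally disjoint paths joining $v_i$ to $v_{i+1}$ (with all internal vertices new and distinct): if $k$ is even, the paths $v_i,w_{i,1},\ldots,w_{i,k/2-1},v_{i+1}$ and $v_i,x_{i,1},\ldots,x_{i,k/2-1},v_{i+1}$; if $k$ is odd, the paths $v_i,w_{i,1},\ldots,w_{i,(k-1)/2-1},v_{i+1}$ and $v_i,x_{i,1},\ldots,x_{i,(k-1)/2},v_{i+1}$. Thus it is a chain of $n$ cycles of length $k$, consecutive cycles sharing the single vertex $v_{i+1}$. *)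

theory Defs
  imports Main "HOL-Computational_Algebra.Primes"
begin

text \<open>A finite simple graph is given by a vertex set V and a set E of
  two-element subsets of V (unordered edges).\<close>

definition odd_prime_graph :: "'a set \<Rightarrow> 'a set set \<Rightarrow> bool" where
  "odd_prime_graph V E \<longleftrightarrow>
     (\<exists>l :: 'a \<Rightarrow> nat.
        bij_betw l V ((\<lambda>j. 2 * j + 1) ` {..<card V}) \<and>
        (\<forall>u v. {u, v} \<in> E \<longrightarrow> coprime (l u) (l v)))"

datatype cvert = CV nat | CW nat nat | CX nat nat

text \<open>Number of internal vertices on the w-path and on the x-path.\<close>
definition wlen :: "nat \<Rightarrow> nat" where
  "wlen k = (if even k then k div 2 - 1 else (k - 1) div 2 - 1)"

definition xlen :: "nat \<Rightarrow> nat" where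
  "xlen k = (if even k then k div 2 - 1 else (k - 1) div 2)"

definition path_edges :: "'a list \<Rightarrow> 'a set set" where
  "path_edges xs = {{xs ! j, xs ! Suc j} | j. Suc j < length xs}"

definition wpath :: "nat \<Rightarrow> nat \<Rightarrow> cvert list" where
  "wpath k i = [CV i] @ map (CW i) [1..<wlen k + 1] @ [CV (Suc i)]"

definition xpath :: "nat \<Rightarrow> nat \<Rightarrow> cvert list" where
  "xpath k i = [CV i] @ map (CX i) [1..<xlen k + 1] @ [CV (Suc i)]"

definition cycle_chain_V :: "nat \<Rightarrow> nat \<Rightarrow> cvert set" where
  "cycle_chain_V k n = (\<Union>i\<in>{1..n}. set (wpath k i) \<union> set (xpath k i))"

definition cycle_chain_E :: "nat \<Rightarrow> nat \<Rightarrow> cvert set set" where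
  "cycle_chain_E k n = (\<Union>i\<in>{1..n}. path_edges (wpath k i) \<union> path_edges (xpath k i))"

end

theory Submission
  imports Defs
begin

definition ee :: "nat \<Rightarrow> nat" where "ee k = (if even k then 1 else 0)"

fun pos :: "nat \<Rightarrow> cvert \<Rightarrow> nat" where
  "pos k (CV i) = (i-1)*(k-1)"
| "pos k (CW i j) = (i-1)*(k-1) + (2*j - ee k)"
| "pos k (CX i j) = (i-1)*(k-1) + (2*j - 1 + ee k)"

definition unpos :: "nat \<Rightarrow> nat \<Rightarrow> cvert" where
  "unpos k p = (let q = p div (k-1); r = p mod (k-1) in
     if r = 0 then CV (q+1)
     else if even k then (if odd r then CW (q+1) ((r+1) div 2) else CX (q+1) (r div 2))
     else (if even r then CW (q+1) (r div 2) else CX (q+1) ((r+1) div 2)))"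

lemma memV:
  assumes "n \<ge> 1"
  shows "v \<in> cycle_chain_V k n \<longleftrightarrow>
    (\<exists>i. v = CV i \<and> 1 \<le> i \<and> i \<le> n+1) \<or>
    (\<exists>i j. v = CW i j \<and> 1 \<le> i \<and> i \<le> n \<and> 1 \<le> j \<and> j \<le> wlen k) \<or>
    (\<exists>i j. v = CX i j \<and> 1 \<le> i \<and> i \<le> n \<and> 1 \<le> j \<and> j \<le> xlen k)"
proof
  assume "v \<in> cycle_chain_V k n"
  then show "(\<exists>i. v = CV i \<and> 1 \<le> i \<and> i \<le> n+1) \<or>
    (\<exists>i j. v = CW i j \<and> 1 \<le> i \<and> i \<le> n \<and> 1 \<le> j \<and> j \<le> wlen k) \<or>
    (\<exists>i j. v = CX i j \<and> 1 \<le> i \<and> i \<le> n \<and> 1 \<le> j \<and> j \<le> xlen k)"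
    unfolding cycle_chain_V_def wpath_def xpath_def by auto
next
  assume h: "(\<exists>i. v = CV i \<and> 1 \<le> i \<and> i \<le> n+1) \<or>
    (\<exists>i j. v = CW i j \<and> 1 \<le> i \<and> i \<le> n \<and> 1 \<le> j \<and> j \<le> wlen k) \<or>
    (\<exists>i j. v = CX i j \<and> 1 \<le> i \<and> i \<le> n \<and> 1 \<le> j \<and> j \<le> xlen k)"
  show "v \<in> cycle_chain_V k n"
  proof -
    { fix i assume "v = CV i" "1 \<le> i" "i \<le> n+1"
      then have ?thesis
      proof (cases "i \<le> n")
        case True
        then show ?thesis using \<open>v = CV i\<close> \<open>1 \<le> i\<close>
          unfolding cycle_chain_V_def wpath_def by (intro UN_I[of i]) auto
      next
        case False
        then have "i = Suc n" using \<open>i \<le> n+1\<close> by simp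
        then show ?thesis using \<open>v = CV i\<close> assms
          unfolding cycle_chain_V_def wpath_def by (intro UN_I[of n]) auto
      qed }
    moreover
    { fix i j assume "v = CW i j" "1 \<le> i" "i \<le> n" "1 \<le> j" "j \<le> wlen k"
      then have ?thesis unfolding cycle_chain_V_def wpath_def by (intro UN_I[of i]) auto }
    moreover
    { fix i j assume "v = CX i j" "1 \<le> i" "i \<le> n" "1 \<le> j" "j \<le> xlen k"
      then have ?thesis unfolding cycle_chain_V_def xpath_def by (intro UN_I[of i]) auto }
    ultimately show ?thesis using h by blast
  qed
qed

lemma wpath_nth:
  assumes "j \<le> wlen k + 1"
  shows "wpath k i ! j = (if j = 0 then CV i else if j \<le> wlen k then CW i j else CV (Suc i))"
  using assms unfolding wpath_def by (auto simp: nth_append nth_Cons')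

lemma xpath_nth:
  assumes "j \<le> xlen k + 1"
  shows "xpath k i ! j = (if j = 0 then CV i else if j \<le> xlen k then CX i j else CV (Suc i))"
  using assms unfolding xpath_def by (auto simp: nth_append nth_Cons')


definition good :: "nat \<Rightarrow> nat \<Rightarrow> bool" where
  "good a b \<longleftrightarrow> b = a+1 \<or> b = a+2 \<or> a = b+1 \<or> a = b+2"

lemma coprime_step:
  assumes d: "d = 2 \<or> d = (4::nat)"
  shows "coprime (2*a+1) (2*a+1+d)"
proof (rule coprimeI)
  fix c assume c1: "c dvd 2*a+1" and c2: "c dvd 2*a+1+d"
  have cd: "c dvd d" using c1 c2 by (metis dvd_add_right_iff)
  have oc: "odd c"
  proof
    assume "even c"
    then have "even (2*a+1)" using c1 dvd_trans by blast
    then show False by simp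
  qed
  have "c \<le> 4" using cd d by (auto dest: dvd_imp_le)
  moreover have "c > 0" using oc by (cases c) auto
  ultimately have "c = 1 \<or> c = 3" using oc by presburger
  moreover have "\<not> (3::nat) dvd d" using d by auto
  ultimately show "is_unit c" using cd by auto
qed

lemma good_coprime: "good a b \<Longrightarrow> coprime (2*a+1) (2*b+1)"
proof -
  assume g: "good a b"
  have c1: "coprime (2*x+1) (2*y+1)" if "y = x + 1 \<or> y = x + 2" for x y :: nat
  proof -
    from that obtain d where d: "d = 2 \<or> d = (4::nat)" and "2*y+1 = 2*x+1+d" by auto
    then show ?thesis using coprime_step[OF d, of x] by simp
  qed
  show ?thesis using g unfolding good_def
    using c1[of a b] c1[of b a]
    by (auto simp: coprime_commute)
qed

lemma div_mod_aux: "r < (m::nat) \<Longrightarrow> (q*m + r) div m = q \<and> (q*m + r) mod m = r"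
  by simp

lemma wlen_facts:
  assumes "k \<ge> 3"
  shows "wlen k \<ge> 1 \<Longrightarrow> 2 * wlen k - ee k + 2 = k - 1"
    and "wlen k = 0 \<Longrightarrow> k - 1 = 2"
    and "2 - ee k = 1 \<or> 2 - ee k = 2"
    and "xlen k \<ge> 1"
    and "2 * xlen k - 1 + ee k + 1 = k - 1"
  using assms unfolding wlen_def xlen_def ee_def by presburger+

lemma w_edge:
  assumes k: "k \<ge> 3" and i: "1 \<le> i" and e: "{u,v} \<in> path_edges (wpath k i)"
  shows "good (pos k u) (pos k v)"
proof -
  obtain j where j: "Suc j < length (wpath k i)"
    and uv: "(u = wpath k i ! j \<and> v = wpath k i ! Suc j) \<or> (u = wpath k i ! Suc j \<and> v = wpath k i ! j)"
    using e unfolding path_edges_def by (auto simp: doubleton_eq_iff)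
  have len: "length (wpath k i) = wlen k + 2" by (simp add: wpath_def)
  obtain i' where i': "i = Suc i'" using i by (cases i) auto
  define P where "P = i' * (k-1)"
  define a where "a = wlen k"
  have p1: "pos k (CV i) = P" by (simp add: i' P_def)
  have p2: "pos k (CV (Suc i)) = P + (k-1)" by (simp add: i' P_def)
  have p3: "pos k (CW i m) = P + (2*m - ee k)" for m by (simp add: i' P_def)
  have F: "a \<ge> 1 \<Longrightarrow> 2 * a - ee k + 2 = k - 1" "a = 0 \<Longrightarrow> k - 1 = 2"
     "2 - ee k = 1 \<or> 2 - ee k = 2" using wlen_facts[OF k] unfolding a_def by auto
  have ja: "j \<le> a" using j len a_def by simp
  have n1: "wpath k i ! j = (if j = 0 then CV i else if j \<le> a then CW i j else CV (Suc i))"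
    using j len unfolding a_def by (intro wpath_nth) simp
  have n2: "wpath k i ! Suc j = (if Suc j \<le> a then CW i (Suc j) else CV (Suc i))"
    using j len wpath_nth[of "Suc j" k i] unfolding a_def by simp
  have gd: "good (pos k (wpath k i ! j)) (pos k (wpath k i ! Suc j))"
  proof (cases "j = 0")
    case True
    show ?thesis
    proof (cases "a = 0")
      case True
      then show ?thesis using \<open>j = 0\<close> n1 n2 p1 p2 F unfolding good_def by simp
    next
      case False
      then show ?thesis using \<open>j = 0\<close> n1 n2 p1 p3[of 1] F unfolding good_def by auto
    qed
  next
    case False
    show ?thesis
    proof (cases "Suc j \<le> a")
      case True
      have "ee k \<le> 1" by (simp add: ee_def)
      moreover have "pos k (CW i (Suc j)) = pos k (CW i j) + 2"
        unfolding p3 using \<open>ee k \<le> 1\<close> False by arith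
      ultimately show ?thesis using False True n1 n2 unfolding good_def by auto
    next
      case False2: False
      then have "j = a" "a \<ge> 1" using ja False by auto
      moreover have "pos k (CV (Suc i)) = pos k (CW i j) + 2"
        unfolding p2 p3 using F(1) \<open>j = a\<close> \<open>a \<ge> 1\<close> by arith
      ultimately show ?thesis using False n1 n2 unfolding good_def by auto
    qed
  qed
  show ?thesis using uv gd unfolding good_def by auto
qed

lemma x_edge:
  assumes k: "k \<ge> 3" and i: "1 \<le> i" and e: "{u,v} \<in> path_edges (xpath k i)"
  shows "good (pos k u) (pos k v)"
proof -
  obtain j where j: "Suc j < length (xpath k i)"
    and uv: "(u = xpath k i ! j \<and> v = xpath k i ! Suc j) \<or> (u = xpath k i ! Suc j \<and> v = xpath k i ! j)"
    using e unfolding path_edges_def by (auto simp: doubleton_eq_iff)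
  have len: "length (xpath k i) = xlen k + 2" by (simp add: xpath_def)
  obtain i' where i': "i = Suc i'" using i by (cases i) auto
  define P where "P = i' * (k-1)"
  define a where "a = xlen k"
  have p1: "pos k (CV i) = P" by (simp add: i' P_def)
  have p2: "pos k (CV (Suc i)) = P + (k-1)" by (simp add: i' P_def)
  have p3: "pos k (CX i m) = P + (2*m - 1 + ee k)" for m by (simp add: i' P_def)
  have F: "a \<ge> 1" "2 * a - 1 + ee k + 1 = k - 1" "ee k = 0 \<or> ee k = 1"
    using wlen_facts[OF k] unfolding a_def ee_def by auto
  have ja: "j \<le> a" using j len a_def by simp
  have n1: "xpath k i ! j = (if j = 0 then CV i else if j \<le> a then CX i j else CV (Suc i))"
    using j len unfolding a_def by (intro xpath_nth) simp
  have n2: "xpath k i ! Suc j = (if Suc j \<le> a then CX i (Suc j) else CV (Suc i))"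
    using j len xpath_nth[of "Suc j" k i] unfolding a_def by simp
  have gd: "good (pos k (xpath k i ! j)) (pos k (xpath k i ! Suc j))"
  proof (cases "j = 0")
    case True
    then show ?thesis using n1 n2 p1 p3[of 1] F unfolding good_def by auto
  next
    case False
    show ?thesis
    proof (cases "Suc j \<le> a")
      case True
      then show ?thesis using False n1 n2 p3[of j] p3[of "Suc j"] F unfolding good_def by auto
    next
      case False2: False
      then have "j = a" using ja False by auto
      then show ?thesis using False n1 n2 p3[of j] p2 F unfolding good_def by auto
    qed
  qed
  show ?thesis using uv gd unfolding good_def by auto
qed


lemma unpos_eq:
  assumes k: "k \<ge> 3" and r: "r < k - 1"
  shows "unpos k (q*(k-1) + r) =
     (if r = 0 then CV (q+1)
     else if even k then (if odd r then CW (q+1) ((r+1) div 2) else CX (q+1) (r div 2))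
     else (if even r then CW (q+1) (r div 2) else CX (q+1) ((r+1) div 2)))"
  using div_mod_aux[OF r, of q] k unfolding unpos_def Let_def by simp

lemma w_r:
  assumes k: "k \<ge> 3" and j: "1 \<le> j" "j \<le> wlen k"
  shows "1 \<le> 2*j - ee k" "2*j - ee k < k - 1"
    "even k \<Longrightarrow> odd (2*j - ee k) \<and> (2*j - ee k + 1) div 2 = j"
    "odd k \<Longrightarrow> even (2*j - ee k) \<and> (2*j - ee k) div 2 = j"
  using assms unfolding wlen_def ee_def by presburger+

lemma x_r:
  assumes k: "k \<ge> 3" and j: "1 \<le> j" "j \<le> xlen k"
  shows "1 \<le> 2*j - 1 + ee k" "2*j - 1 + ee k < k - 1"
    "even k \<Longrightarrow> even (2*j - 1 + ee k) \<and> (2*j - 1 + ee k) div 2 = j"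
    "odd k \<Longrightarrow> odd (2*j - 1 + ee k) \<and> (2*j - 1 + ee k + 1) div 2 = j"
  using assms unfolding xlen_def ee_def by presburger+

lemma unpos_pos:
  assumes k: "k \<ge> 3" and n: "n \<ge> 1" and v: "v \<in> cycle_chain_V k n"
  shows "unpos k (pos k v) = v \<and> pos k v < n*(k-1) + 1"
proof -
  have k1: "0 < k - 1" using k by simp
  consider (a) i where "v = CV i" "1 \<le> i" "i \<le> n+1"
    | (b) i j where "v = CW i j" "1 \<le> i" "i \<le> n" "1 \<le> j" "j \<le> wlen k"
    | (c) i j where "v = CX i j" "1 \<le> i" "i \<le> n" "1 \<le> j" "j \<le> xlen k"
    using v memV[OF n] by blast
  then show ?thesis
  proof cases
    case a
    then obtain i' where i': "i = Suc i'" by (cases i) auto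
    have "unpos k (i'*(k-1) + 0) = CV (i'+1)" using unpos_eq[OF k, of 0 i'] k by simp
    moreover have "i'*(k-1) < n*(k-1) + 1" using a i' mult_le_mono1[of i' n "k-1"] by linarith
    ultimately show ?thesis using a i' by simp
  next
    case b
    then obtain i' where i': "i = Suc i'" by (cases i) auto
    note R = w_r[OF k b(4) b(5)]
    have "unpos k (i'*(k-1) + (2*j - ee k)) = CW (Suc i') j"
      using unpos_eq[OF k R(2), of i'] R by (cases "even k") auto
    moreover have "i'*(k-1) + (k-1) \<le> n*(k-1)"
    proof -
      have "i'*(k-1) + (k-1) = Suc i' * (k-1)" by simp
      also have "\<dots> \<le> n*(k-1)" using b i' by (intro mult_le_mono1) simp
      finally show ?thesis .
    qed
    ultimately show ?thesis using b i' R(2) by simp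
  next
    case c
    then obtain i' where i': "i = Suc i'" by (cases i) auto
    note R = x_r[OF k c(4) c(5)]
    have "unpos k (i'*(k-1) + (2*j - 1 + ee k)) = CX (Suc i') j"
      using unpos_eq[OF k R(2), of i'] R by (cases "even k") auto
    moreover have "i'*(k-1) + (k-1) \<le> n*(k-1)"
    proof -
      have "i'*(k-1) + (k-1) = Suc i' * (k-1)" by simp
      also have "\<dots> \<le> n*(k-1)" using c i' by (intro mult_le_mono1) simp
      finally show ?thesis .
    qed
    ultimately show ?thesis using c i' R(2) by simp
  qed
qed

lemma pos_unpos:
  assumes k: "k \<ge> 3" and n: "n \<ge> 1" and p: "p < n*(k-1) + 1"
  shows "pos k (unpos k p) = p \<and> unpos k p \<in> cycle_chain_V k n"
proof -
  define q where "q = p div (k-1)"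
  define r where "r = p mod (k-1)"
  have k1: "0 < k - 1" using k by simp
  have pq: "p = q*(k-1) + r" unfolding q_def r_def by (metis div_mult_mod_eq)
  have rl: "r < k - 1" unfolding r_def using k1 by simp
  have U: "unpos k p =
     (if r = 0 then CV (q+1)
     else if even k then (if odd r then CW (q+1) ((r+1) div 2) else CX (q+1) (r div 2))
     else (if even r then CW (q+1) (r div 2) else CX (q+1) ((r+1) div 2)))"
    using unpos_eq[OF k rl, of q] pq by simp
  have qn: "q \<le> n"
  proof (rule ccontr)
    assume "\<not> q \<le> n"
    then have "Suc n * (k-1) \<le> q * (k-1)" by (intro mult_le_mono1) simp
    then show False using p pq k1 by simp
  qed
  have qn2: "q < n" if "r \<noteq> 0"
  proof (rule ccontr)
    assume "\<not> q < n"
    then have "n * (k-1) \<le> q * (k-1)" by (intro mult_le_mono1) simp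
    then show False using p pq that by linarith
  qed
  have mem: "unpos k p \<in> cycle_chain_V k n"
  proof (cases "r = 0")
    case True
    then show ?thesis unfolding memV[OF n] U using qn by simp
  next
    case False
    have W1: "1 \<le> (r+1) div 2 \<and> (r+1) div 2 \<le> wlen k" if "even k" "odd r"
      using that rl k unfolding wlen_def by presburger
    have X1: "1 \<le> r div 2 \<and> r div 2 \<le> xlen k" if "even k" "even r"
      using that rl k False unfolding xlen_def by presburger
    have W2: "1 \<le> r div 2 \<and> r div 2 \<le> wlen k" if "odd k" "even r"
      using that rl k False unfolding wlen_def by presburger
    have X2: "1 \<le> (r+1) div 2 \<and> (r+1) div 2 \<le> xlen k" if "odd k" "odd r"
      using that rl k unfolding xlen_def by presburger
    show ?thesis unfolding memV[OF n] U using qn2[OF False] False W1 X1 W2 X2 by auto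
  qed
  have E1: "2 * ((r+1) div 2) - ee k = r" if "even k" "odd r" using that unfolding ee_def by presburger
  have E2: "2 * (r div 2) - 1 + ee k = r" if "even k" "even r" "r \<noteq> 0" using that unfolding ee_def by presburger
  have E3: "2 * (r div 2) - ee k = r" if "odd k" "even r" using that unfolding ee_def by presburger
  have E4: "2 * ((r+1) div 2) - 1 + ee k = r" if "odd k" "odd r" using that unfolding ee_def by presburger
  have "pos k (unpos k p) = p"
    unfolding U using pq E1 E2 E3 E4 by auto
  with mem show ?thesis by simp
qed

theorem theorem3p3:
  fixes k n :: nat
  assumes "k \<ge> 3" and "n \<ge> 1"
  shows "odd_prime_graph (cycle_chain_V k n) (cycle_chain_E k n)"
proof -
  let ?V = "cycle_chain_V k n"
  let ?M = "n*(k-1) + 1"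
  have b: "bij_betw (pos k) ?V {..<?M}"
    by (rule bij_betw_byWitness[where f' = "unpos k"])
       (use unpos_pos[OF assms] pos_unpos[OF assms] in auto)
  have cV: "card ?V = ?M" using bij_betw_same_card[OF b] by simp
  have b2: "bij_betw (\<lambda>j::nat. 2*j+1) {..<?M} ((\<lambda>j. 2*j+1) ` {..<?M})"
    by (rule inj_on_imp_bij_betw) (auto simp: inj_on_def)
  have bl: "bij_betw ((\<lambda>j::nat. 2*j+1) \<circ> pos k) ?V ((\<lambda>j. 2*j+1) ` {..<card ?V})"
    using bij_betw_trans[OF b b2] cV by simp
  have ed: "coprime (2 * pos k u + 1) (2 * pos k v + 1)" if "{u,v} \<in> cycle_chain_E k n" for u v
  proof -
    from that obtain i where i: "i \<in> {1..n}"
      and "{u,v} \<in> path_edges (wpath k i) \<or> {u,v} \<in> path_edges (xpath k i)"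
      unfolding cycle_chain_E_def by blast
    then have "good (pos k u) (pos k v)" using w_edge[OF assms(1)] x_edge[OF assms(1)] by auto
    then show ?thesis by (rule good_coprime)
  qed
  show ?thesis unfolding odd_prime_graph_def
    by (rule exI[of _ "(\<lambda>j::nat. 2*j+1) \<circ> pos k"]) (use bl ed in auto)
qed

end
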